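(* Let $X$ be a rearrangement invariant space on $(0,\infty)$ with the Fatou property such that the Cesàro space $CX$ is non-trivial. Suppose that either the ideal $X_a$ is non-trivial and the Cesàro operator $C$ is bounded on $X$, or $X_a=X$. Then the Cesàro space $C(X\cap L_\infty)$ contains a lattice isometric copy of $\ell_\infty$.
   Context: A rearrangement invariant space on $(0,\infty)$ is a Banach space $X\subset L_0(0,\infty)$ with the ideal property ($|f|\le|g|$ a.e., $g\in X$ imply $f\in X$, $\|f\|_X\le\|g\|_X$), containing an a.e. positive function, with equal norms for equimeasurable functions. Fatou property: $0\le f_n\uparrow f$ a.e., $\sup\|f_n\|_X<\infty$ imply $f\in X$ and $\|f_n\|_X\uparrow\|f\|_X$. $X_a$ is the ideal of order continuous elements. $X\cap L_\infty$ is normed by $\|f\|_{X\cap L_\infty}=\max\{\|f\|_X,\|f\|_{L_\infty}\}$. $C(f)(x)=\frac1x\int_0^x|f(t)|\,dt$; for a Banach ideal space $Y$, $CY=\{f:C(|f|)\in Y\}$ with $\|f\|_{CY}=\|C(|f|)\|_Y$. A lattice isometric copy of $\ell_\infty$ is the image of a linear isometric lattice-homomorphic embedding of $\ell_\infty$. *)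

theory Defs
  imports "HOL-Analysis.Analysis"
begin

text \<open>Functions on (0,infinity) are represented as functions real to real; only their
values on (0,infinity) matter.\<close>

definition M0 :: "real measure" where
  "M0 = restrict_space lborel {0<..}"

definition L0 :: "(real \<Rightarrow> real) set" where
  "L0 = borel_measurable M0"

definition ae_eq :: "(real \<Rightarrow> real) \<Rightarrow> (real \<Rightarrow> real) \<Rightarrow> bool" where
  "ae_eq f g \<longleftrightarrow> (AE t in M0. f t = g t)"

definition distrib_fun :: "(real \<Rightarrow> real) \<Rightarrow> real \<Rightarrow> ennreal" where
  "distrib_fun f s = emeasure lborel {t \<in> {0<..}. \<bar>f t\<bar> > s}"

definition equimeasurable :: "(real \<Rightarrow> real) \<Rightarrow> (real \<Rightarrow> real) \<Rightarrow> bool" where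
  "equimeasurable f g \<longleftrightarrow> (\<forall>s\<ge>0. distrib_fun f s = distrib_fun g s)"

text \<open>Banach ideal space (Banach function lattice) on (0,infinity), with the elements
identified modulo a.e. equality: ideal property, containing an a.e. positive function.\<close>
definition banach_ideal_space :: "(real \<Rightarrow> real) set \<Rightarrow> ((real \<Rightarrow> real) \<Rightarrow> real) \<Rightarrow> bool" where
  "banach_ideal_space S N \<longleftrightarrow>
     S \<subseteq> L0 \<and>
     (\<forall>f\<in>S. \<forall>g\<in>S. (\<lambda>t. f t + g t) \<in> S) \<and>
     (\<forall>f\<in>S. \<forall>c. (\<lambda>t. c * f t) \<in> S) \<and>
     (\<forall>f\<in>S. N f \<ge> 0) \<and>
     (\<forall>f\<in>S. N f = 0 \<longleftrightarrow> ae_eq f (\<lambda>_. 0)) \<and>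
     (\<forall>f\<in>S. \<forall>g\<in>S. N (\<lambda>t. f t + g t) \<le> N f + N g) \<and>
     (\<forall>f\<in>S. \<forall>c. N (\<lambda>t. c * f t) = \<bar>c\<bar> * N f) \<and>
     \<comment> \<open>completeness\<close>
     (\<forall>F. (\<forall>n. F n \<in> S) \<longrightarrow>
          (\<forall>e>0. \<exists>K. \<forall>m\<ge>K. \<forall>n\<ge>K. N (\<lambda>t. F m t - F n t) < e) \<longrightarrow>
          (\<exists>f\<in>S. (\<lambda>n. N (\<lambda>t. F n t - f t)) \<longlonglongrightarrow> 0)) \<and>
     \<comment> \<open>ideal property\<close>
     (\<forall>f g. f \<in> L0 \<longrightarrow> g \<in> S \<longrightarrow> (AE t in M0. \<bar>f t\<bar> \<le> \<bar>g t\<bar>) \<longrightarrow>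
          f \<in> S \<and> N f \<le> N g) \<and>
     \<comment> \<open>contains an a.e. positive function\<close>
     (\<exists>f\<in>S. AE t in M0. f t > 0)"

definition rearrangement_invariant :: "(real \<Rightarrow> real) set \<Rightarrow> ((real \<Rightarrow> real) \<Rightarrow> real) \<Rightarrow> bool" where
  "rearrangement_invariant S N \<longleftrightarrow>
     banach_ideal_space S N \<and>
     (\<forall>f g. f \<in> S \<longrightarrow> g \<in> L0 \<longrightarrow> equimeasurable f g \<longrightarrow> g \<in> S \<and> N g = N f)"

definition fatou_property :: "(real \<Rightarrow> real) set \<Rightarrow> ((real \<Rightarrow> real) \<Rightarrow> real) \<Rightarrow> bool" where
  "fatou_property S N \<longleftrightarrow>
     (\<forall>F f. (\<forall>n. F n \<in> S) \<longrightarrow> f \<in> L0 \<longrightarrow>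
        (AE t in M0. (\<forall>n. 0 \<le> F n t \<and> F n t \<le> F (Suc n) t) \<and> (\<lambda>n. F n t) \<longlonglongrightarrow> f t) \<longrightarrow>
        bdd_above (range (\<lambda>n. N (F n))) \<longrightarrow>
        f \<in> S \<and> incseq (\<lambda>n. N (F n)) \<and> (\<lambda>n. N (F n)) \<longlonglongrightarrow> N f)"

text \<open>Order continuous elements: the ideal X_a.\<close>
definition order_continuous_part :: "(real \<Rightarrow> real) set \<Rightarrow> ((real \<Rightarrow> real) \<Rightarrow> real) \<Rightarrow> (real \<Rightarrow> real) set" where
  "order_continuous_part S N =
     {f \<in> S. \<forall>F. (\<forall>n. F n \<in> L0) \<longrightarrow>
        (AE t in M0. (\<forall>n. 0 \<le> F n t \<and> F n t \<le> \<bar>f t\<bar> \<and> F (Suc n) t \<le> F n t) \<and>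
                     (\<lambda>n. F n t) \<longlonglongrightarrow> 0) \<longrightarrow>
        (\<lambda>n. N (F n)) \<longlonglongrightarrow> 0}"

definition Linf :: "(real \<Rightarrow> real) set" where
  "Linf = {f \<in> L0. \<exists>M. AE t in M0. \<bar>f t\<bar> \<le> M}"

definition linf_norm :: "(real \<Rightarrow> real) \<Rightarrow> real" where
  "linf_norm f = Inf {M. 0 \<le> M \<and> (AE t in M0. \<bar>f t\<bar> \<le> M)}"

definition inter_Linf_set :: "(real \<Rightarrow> real) set \<Rightarrow> (real \<Rightarrow> real) set" where
  "inter_Linf_set S = S \<inter> Linf"

definition inter_Linf_norm :: "((real \<Rightarrow> real) \<Rightarrow> real) \<Rightarrow> (real \<Rightarrow> real) \<Rightarrow> real" where
  "inter_Linf_norm N f = max (N f) (linf_norm f)"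

text \<open>Cesaro operator C(f)(x) = (1/x) * integral over (0,x) of |f|. It is meaningful
(i.e. C|f| is in L0) iff |f| is integrable over (0,x) for every x > 0.\<close>
definition cesaro_defined :: "(real \<Rightarrow> real) \<Rightarrow> bool" where
  "cesaro_defined f \<longleftrightarrow> (\<forall>x>0. set_integrable lborel {0<..<x} (\<lambda>t. \<bar>f t\<bar>))"

definition cesaro :: "(real \<Rightarrow> real) \<Rightarrow> real \<Rightarrow> real" where
  "cesaro f x = (set_lebesgue_integral lborel {0<..<x} (\<lambda>t. \<bar>f t\<bar>)) / x"

definition cesaro_set :: "(real \<Rightarrow> real) set \<Rightarrow> (real \<Rightarrow> real) set" where
  "cesaro_set S = {f \<in> L0. cesaro_defined f \<and> cesaro f \<in> S}"

definition cesaro_norm :: "((real \<Rightarrow> real) \<Rightarrow> real) \<Rightarrow> (real \<Rightarrow> real) \<Rightarrow> real" where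
  "cesaro_norm N f = N (cesaro f)"

definition cesaro_bounded_on :: "(real \<Rightarrow> real) set \<Rightarrow> ((real \<Rightarrow> real) \<Rightarrow> real) \<Rightarrow> bool" where
  "cesaro_bounded_on S N \<longleftrightarrow>
     (\<exists>K. \<forall>f\<in>S. cesaro_defined f \<and> cesaro f \<in> S \<and> N (cesaro f) \<le> K * N f)"

definition ell_inf :: "(nat \<Rightarrow> real) set" where
  "ell_inf = {a. bounded (range a)}"

definition ell_inf_norm :: "(nat \<Rightarrow> real) \<Rightarrow> real" where
  "ell_inf_norm a = (SUP n. \<bar>a n\<bar>)"

definition contains_lattice_isometric_ell_inf ::
    "(real \<Rightarrow> real) set \<Rightarrow> ((real \<Rightarrow> real) \<Rightarrow> real) \<Rightarrow> bool" where
  "contains_lattice_isometric_ell_inf S N \<longleftrightarrow>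
     (\<exists>T :: (nat \<Rightarrow> real) \<Rightarrow> real \<Rightarrow> real.
        (\<forall>a\<in>ell_inf. T a \<in> S) \<and>
        (\<forall>a\<in>ell_inf. \<forall>b\<in>ell_inf. ae_eq (T (\<lambda>n. a n + b n)) (\<lambda>t. T a t + T b t)) \<and>
        (\<forall>a\<in>ell_inf. \<forall>c. ae_eq (T (\<lambda>n. c * a n)) (\<lambda>t. c * T a t)) \<and>
        (\<forall>a\<in>ell_inf. \<forall>b\<in>ell_inf. ae_eq (T (\<lambda>n. max (a n) (b n))) (\<lambda>t. max (T a t) (T b t))) \<and>
        (\<forall>a\<in>ell_inf. N (T a) = ell_inf_norm a))"

end

theory Submission
  imports Defs
begin


lemma borel_L0: "f \<in> borel_measurable borel \<Longrightarrow> f \<in> L0"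
  unfolding L0_def M0_def
  by (rule measurable_restrict_space1) (simp add: measurable_lborel2)

lemma AE_M0I: "(\<And>t. t > 0 \<Longrightarrow> P t) \<Longrightarrow> AE t in M0. P t"
  unfolding M0_def
  by (subst AE_restrict_space_iff) auto

lemma AE_M0_iff: "(AE t in M0. P t) \<longleftrightarrow> (AE t in lborel. t > 0 \<longrightarrow> P t)"
  unfolding M0_def
  by (subst AE_restrict_space_iff) auto

lemma AE_M0_contra:
  assumes "AE t in M0. P t" "S \<in> sets borel" "S \<subseteq> {0<..}" "emeasure lborel S > 0"
    "\<And>t. t \<in> S \<Longrightarrow> \<not> P t"
  shows False
proof -
  have "AE t in lborel. t \<notin> S"
    using assms(1) assms(3,5) unfolding AE_M0_iff by (auto elim!: AE_mp)
  then have "AE t in lborel. t \<in> S \<longrightarrow> False" by auto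
  then have "emeasure lborel S = 0"
    using assms(2) by (subst AE_iff_measurable[of S, symmetric]) auto
  then show False using assms(4) by simp
qed

lemma equimeasurable_indicator:
  assumes "A \<subseteq> {0<..}" "B \<subseteq> {0<..}" "emeasure lborel A = emeasure lborel B"
  shows "equimeasurable (indicator A) (indicator B)"
  unfolding equimeasurable_def distrib_fun_def
proof (intro allI impI)
  fix s :: real assume s: "s \<ge> 0"
  show "emeasure lborel {t \<in> {0<..}. s < \<bar>indicator A t :: real\<bar>} =
        emeasure lborel {t \<in> {0<..}. s < \<bar>indicator B t :: real\<bar>}"
  proof (cases "s < 1")
    case True
    then have "{t \<in> {0<..}. s < \<bar>indicator A t :: real\<bar>} = A"
      "{t \<in> {0<..}. s < \<bar>indicator B t :: real\<bar>} = B"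
      using assms s by (auto simp: indicator_def)
    then show ?thesis using assms by simp
  next
    case False
    then have "{t \<in> {0<..}. s < \<bar>indicator A t :: real\<bar>} = {}"
      "{t \<in> {0<..}. s < \<bar>indicator B t :: real\<bar>} = {}"
      using assms s by (auto simp: indicator_def)
    then show ?thesis by (simp only:)
  qed
qed

definition yk :: "real \<Rightarrow> nat \<Rightarrow> real" where "yk d k = d / fact (Suc k)"
definition Ik :: "real \<Rightarrow> nat \<Rightarrow> real set" where "Ik d k = {yk d (Suc k)<..yk d k}"
definition nidx :: "nat \<Rightarrow> nat" where "nidx k = fst (prod_decode k)"
definition Tm :: "real \<Rightarrow> (nat \<Rightarrow> real) \<Rightarrow> real \<Rightarrow> real" where
  "Tm d a t = (\<Sum>k. a (nidx k) * indicator (Ik d k) t)"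

lemma yk_pos: "d > 0 \<Longrightarrow> yk d k > 0"
  unfolding yk_def by simp

lemma yk_le: "d > 0 \<Longrightarrow> yk d k \<le> d"
proof -
  have f: "(1::real) \<le> fact (Suc k)" by (rule fact_ge_1)
  assume "d > 0"
  then have "d / fact (Suc k) \<le> d / 1"
    by (intro divide_left_mono) (use f in \<open>auto simp del: fact_Suc\<close>)
  then show ?thesis unfolding yk_def by simp
qed

lemma yk_Suc: "yk d (Suc k) = yk d k / (real k + 2)"
  unfolding yk_def by (simp add: field_simps)

lemma yk_antimono: "d > 0 \<Longrightarrow> j \<le> k \<Longrightarrow> yk d k \<le> yk d j"
  unfolding yk_def
  by (intro divide_left_mono) (auto simp: fact_mono simp del: fact_Suc)

lemma yk_Suc_less: "d > 0 \<Longrightarrow> yk d (Suc k) < yk d k"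
  using yk_pos[of d k] unfolding yk_Suc by (simp add: divide_less_eq)

lemma Ik_disj: assumes "d > 0" "t \<in> Ik d j" "t \<in> Ik d k" shows "j = k"
proof (rule ccontr)
  assume "j \<noteq> k"
  then have "j < k \<or> k < j" by arith
  then show False
  proof
    assume "j < k"
    then have "yk d k \<le> yk d (Suc j)" using yk_antimono[OF assms(1)] by simp
    then show False using assms unfolding Ik_def by auto
  next
    assume "k < j"
    then have "yk d j \<le> yk d (Suc k)" using yk_antimono[OF assms(1)] by simp
    then show False using assms unfolding Ik_def by auto
  qed
qed

lemma Ik_sub: "d > 0 \<Longrightarrow> Ik d k \<subseteq> {0<..d}"
  unfolding Ik_def using yk_pos[of d "Suc k"] yk_le[of d k] by auto

lemma Tm_in: assumes "d > 0" "t \<in> Ik d k" shows "Tm d a t = a (nidx k)"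
proof -
  have "(\<Sum>j. a (nidx j) * indicator (Ik d j) t) = (\<Sum>j\<in>{k}. a (nidx j) * indicator (Ik d j) t)"
    by (rule suminf_finite) (use Ik_disj[OF assms(1) _ assms(2)] in \<open>auto simp: indicator_def\<close>)
  then show ?thesis unfolding Tm_def using assms by simp
qed

lemma Tm_out: assumes "\<And>k. t \<notin> Ik d k" shows "Tm d a t = 0"
  unfolding Tm_def using assms by simp

lemma Tm_cases: "d > 0 \<Longrightarrow> (\<exists>k. t \<in> Ik d k \<and> Tm d a t = a (nidx k)) \<or> ((\<forall>k. t \<notin> Ik d k) \<and> Tm d a t = 0)"
  using Tm_in Tm_out by blast

lemma Tm_meas: "Tm d a \<in> borel_measurable borel"
  unfolding Tm_def Ik_def by measurable

lemma Tm_bound: assumes "d > 0" "\<And>n. \<bar>a n\<bar> \<le> s"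
  shows "\<bar>Tm d a t\<bar> \<le> s * indicator {0<..d} t"
proof -
  have s: "s \<ge> 0" using assms(2)[of 0] by linarith
  show ?thesis
    using Tm_cases[OF assms(1), of t a] Ik_sub[OF assms(1)] s assms(2)
    by (force simp: indicator_def)
qed

lemma Tm_add: assumes "d > 0" shows "Tm d (\<lambda>n. a n + b n) t = Tm d a t + Tm d b t"
proof (cases "\<exists>k. t \<in> Ik d k")
  case True then obtain k where "t \<in> Ik d k" by blast
  then show ?thesis using Tm_in[OF assms] by simp
qed (simp add: Tm_out)

lemma Tm_scale: assumes "d > 0" shows "Tm d (\<lambda>n. c * a n) t = c * Tm d a t"
proof (cases "\<exists>k. t \<in> Ik d k")
  case True then obtain k where "t \<in> Ik d k" by blast
  then show ?thesis using Tm_in[OF assms] by simp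
qed (simp add: Tm_out)

lemma Tm_max: assumes "d > 0" shows "Tm d (\<lambda>n. max (a n) (b n)) t = max (Tm d a t) (Tm d b t)"
proof (cases "\<exists>k. t \<in> Ik d k")
  case True then obtain k where "t \<in> Ik d k" by blast
  then show ?thesis using Tm_in[OF assms] by simp
qed (simp add: Tm_out)


lemma cesaro_meas: assumes [measurable]: "f \<in> borel_measurable borel"
  shows "cesaro f \<in> borel_measurable borel"
proof -
  have "(\<lambda>x. integral\<^sup>L lborel (\<lambda>t. indicator {0<..<x} t *\<^sub>R \<bar>f t\<bar>)) \<in> borel_measurable borel"
  proof (rule lborel.borel_measurable_lebesgue_integral)
    have *: "(\<lambda>(x, t). indicator {0<..<x} t *\<^sub>R \<bar>f t\<bar>) = (\<lambda>p::real\<times>real. (if 0 < snd p \<and> snd p < fst p then 1 else 0) * \<bar>f (snd p)\<bar>)"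
      by (auto simp: indicator_def fun_eq_iff)
    show "(\<lambda>(x, t). indicator {0<..<x} t *\<^sub>R \<bar>f t\<bar>) \<in> borel_measurable (borel \<Otimes>\<^sub>M lborel)"
      unfolding * by measurable
  qed
  then show ?thesis unfolding cesaro_def[abs_def] set_lebesgue_integral_def by measurable
qed

lemma integrable_ind_const: "A \<in> sets borel \<Longrightarrow> emeasure lborel A < \<infinity> \<Longrightarrow> integrable lborel (\<lambda>t. c * indicator A t :: real)"
  by (intro integrable_mult_right integrable_real_indicator) auto

lemma integral_ind_const: "A \<in> sets borel \<Longrightarrow> (LINT t|lborel. c * indicator A t :: real) = c * measure lborel A"
  by (simp add: integral_indicator)

lemma integrable_ind_bounded:
  fixes f :: "real \<Rightarrow> real" and B x :: real
  assumes [measurable]: "f \<in> borel_measurable borel" and b: "\<And>t. \<bar>f t\<bar> \<le> B" and x: "0 \<le> x"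
  shows "integrable lborel (\<lambda>t. indicator {0<..<x} t * \<bar>f t\<bar>)"
proof (rule Bochner_Integration.integrable_bound[OF integrable_ind_const[of "{0<..<x}" B]])
  show "AE t in lborel. norm (indicator {0<..<x} t * \<bar>f t\<bar>) \<le> norm (B * indicator {0<..<x} t)"
    using b by (intro AE_I2) (auto simp: indicator_def intro: order_trans[OF b abs_ge_self])
qed (use x in auto)

lemma cesaro_defined_bounded:
  assumes "f \<in> borel_measurable borel" "\<And>t. \<bar>f t\<bar> \<le> B"
  shows "cesaro_defined f"
  unfolding cesaro_defined_def set_integrable_def
  using integrable_ind_bounded[OF assms] by (simp add: less_imp_le)

lemma cesaro_nonneg: "0 \<le> cesaro f x"
proof (cases "x > 0")
  case True
  have "0 \<le> set_lebesgue_integral lborel {0<..<x} (\<lambda>t. \<bar>f t\<bar>)"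
    unfolding set_lebesgue_integral_def by (intro integral_nonneg_AE) auto
  then show ?thesis unfolding cesaro_def using True by simp
next
  case False
  then have "{0<..<x} = {}" by auto
  then show ?thesis unfolding cesaro_def set_lebesgue_integral_def by simp
qed

lemma cesaro_upper:
  assumes [measurable]: "f \<in> borel_measurable borel" and b: "\<And>t. \<bar>f t\<bar> \<le> s * indicator {0<..d} t"
    and x: "0 < x" and d: "0 < d"
  shows "cesaro f x \<le> s * min 1 (d / x)"
proof -
  have s: "0 \<le> s" using b[of d] d by simp
  have bB: "\<bar>f t\<bar> \<le> s" for t using b[of t] s by (cases "0<t \<and> t \<le> d") (auto simp: indicator_def)
  have bz: "f t = 0" if "\<not> (0 < t \<and> t \<le> d)" for t using b[of t] that by (simp add: indicator_def)
  let ?g = "\<lambda>t. indicator {0<..<x} t * \<bar>f t\<bar>"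
  have ig: "integrable lborel ?g" using integrable_ind_bounded[OF assms(1) bB] x by simp
  have e: "cesaro f x = integral\<^sup>L lborel ?g / x"
    unfolding cesaro_def set_lebesgue_integral_def by simp
  have "integral\<^sup>L lborel ?g \<le> (LINT t|lborel. s * indicator {0<..<x} t)"
    by (rule integral_mono[OF ig integrable_ind_const])
       (use bB x in \<open>auto simp: indicator_def\<close>)
  also have "\<dots> = s * x" using x by (simp add: integral_ind_const)
  finally have 1: "integral\<^sup>L lborel ?g \<le> s * x" .
  have "integral\<^sup>L lborel ?g \<le> (LINT t|lborel. s * indicator {0<..d} t)"
    by (rule integral_mono[OF ig integrable_ind_const])
       (use bB bz s d in \<open>auto simp: indicator_def\<close>)
  also have "\<dots> = s * d" using d by (simp add: integral_ind_const)
  finally have 2: "integral\<^sup>L lborel ?g \<le> s * d" .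
  have "integral\<^sup>L lborel ?g / x \<le> s * min 1 (d / x)"
  proof (cases "x \<le> d")
    case True
    then have "min 1 (d/x) = 1" using x by (simp add: le_divide_eq)
    then show ?thesis using 1 x by (simp add: divide_le_eq)
  next
    case False
    then have "min 1 (d/x) = d/x" using x by (simp add: divide_le_eq)
    then show ?thesis using 2 x by (simp add: divide_le_eq)
  qed
  then show ?thesis using e by simp
qed

lemma cesaro_lower:
  assumes [measurable]: "f \<in> borel_measurable borel" and bB: "\<And>t. \<bar>f t\<bar> \<le> B"
    and x: "0 < x" and y: "0 \<le> y" "y \<le> x" and c: "\<And>t. y < t \<Longrightarrow> t < x \<Longrightarrow> \<bar>f t\<bar> = c"
  shows "c * (x - y) / x \<le> cesaro f x"
proof -
  let ?g = "\<lambda>t. indicator {0<..<x} t * \<bar>f t\<bar>"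
  have ig: "integrable lborel ?g" using integrable_ind_bounded[OF assms(1) bB] x by simp
  have e: "cesaro f x = integral\<^sup>L lborel ?g / x"
    unfolding cesaro_def set_lebesgue_integral_def by simp
  have "c * (x - y) = (LINT t|lborel. c * indicator {y<..<x} t)" using y by (simp add: integral_ind_const)
  also have "\<dots> \<le> integral\<^sup>L lborel ?g"
    by (rule integral_mono[OF integrable_ind_const ig])
       (use c y in \<open>auto simp: indicator_def\<close>)
  finally show ?thesis using e x by (simp add: divide_right_mono)
qed


lemma ell_inf_bound:
  assumes "a \<in> ell_inf"
  shows "bdd_above (range (\<lambda>n. \<bar>a n\<bar>))" "\<And>n. \<bar>a n\<bar> \<le> ell_inf_norm a" "0 \<le> ell_inf_norm a"
proof -
  obtain B where B: "\<And>n. \<bar>a n\<bar> \<le> B" using assms unfolding ell_inf_def bounded_real by auto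
  show bdd: "bdd_above (range (\<lambda>n. \<bar>a n\<bar>))" using B by (intro bdd_aboveI[where M=B]) auto
  show "\<bar>a n\<bar> \<le> ell_inf_norm a" for n unfolding ell_inf_norm_def by (rule cSUP_upper[OF _ bdd]) auto
  then show "0 \<le> ell_inf_norm a" using abs_ge_zero order_trans by blast
qed

lemma Tm_lower_point:
  assumes d: "d > 0" and x: "yk d k / 2 < x" "x \<le> yk d k" and bB: "\<And>n. \<bar>a n\<bar> \<le> B"
  shows "\<bar>a (nidx k)\<bar> * (1 - 2 / (real k + 2)) \<le> cesaro (Tm d a) x"
proof -
  let ?y = "yk d (Suc k)"
  have yy: "?y = yk d k / (real k + 2)" by (rule yk_Suc)
  have ypos: "0 < yk d k" using yk_pos[OF d] .
  have y2: "?y \<le> yk d k / 2" unfolding yy using ypos by (intro divide_left_mono) auto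
  have x0: "0 < x" using x ypos by linarith
  have y0: "0 \<le> ?y" using yk_pos[OF d, of "Suc k"] by simp
  have B: "\<bar>Tm d a t\<bar> \<le> B" for t
    using Tm_cases[OF d, of t a] bB[of 0] bB by (metis abs_zero abs_ge_zero order_trans)
  have c: "\<bar>Tm d a t\<bar> = \<bar>a (nidx k)\<bar>" if "?y < t" "t < x" for t
  proof -
    have "t \<in> Ik d k" unfolding Ik_def using that x by auto
    then show ?thesis using Tm_in[OF d] by simp
  qed
  have low: "\<bar>a (nidx k)\<bar> * (x - ?y) / x \<le> cesaro (Tm d a) x"
    by (rule cesaro_lower[OF Tm_meas B x0 y0]) (use y2 x in \<open>auto intro: c\<close>)
  have nz: "real k * yk d k + 2 * yk d k > 0" using ypos by (simp add: add_nonneg_pos)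
  have "2 / (real k + 2) = (yk d k / (real k + 2)) / (yk d k / 2)" using ypos nz by (simp add: field_simps)
  also have "\<dots> \<ge> ?y / x" unfolding yy[symmetric]
    using x y0 ypos by (intro divide_left_mono) auto
  finally have "1 - 2 / (real k + 2) \<le> (x - ?y) / x" using x0 by (simp add: diff_divide_distrib)
  then have "\<bar>a (nidx k)\<bar> * (1 - 2 / (real k + 2)) \<le> \<bar>a (nidx k)\<bar> * ((x - ?y) / x)"
    by (intro mult_left_mono) auto
  then show ?thesis using low by simp
qed


lemma linf_norm_eq:
  assumes d: "d > 0" and a: "a \<in> ell_inf"
  shows "linf_norm (cesaro (Tm d a)) = ell_inf_norm a"
proof -
  let ?s = "ell_inf_norm a"
  note sb = ell_inf_bound[OF a]
  have ub: "\<bar>cesaro (Tm d a) x\<bar> \<le> ?s" if "x > 0" for x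
  proof -
    have "cesaro (Tm d a) x \<le> ?s * min 1 (d / x)"
      by (rule cesaro_upper[OF Tm_meas Tm_bound[OF d sb(2)] that d])
    also have "\<dots> \<le> ?s" using sb(3) by (simp add: mult_left_le)
    finally show ?thesis using cesaro_nonneg by simp
  qed
  show ?thesis unfolding linf_norm_def
  proof (rule cInf_eq_minimum)
    show "?s \<in> {M. 0 \<le> M \<and> (AE t in M0. \<bar>cesaro (Tm d a) t\<bar> \<le> M)}"
      using sb(3) ub by (auto intro: AE_M0I)
  next
    fix M assume "M \<in> {M. 0 \<le> M \<and> (AE t in M0. \<bar>cesaro (Tm d a) t\<bar> \<le> M)}"
    then have M0: "0 \<le> M" and AE: "AE t in M0. \<bar>cesaro (Tm d a) t\<bar> \<le> M" by auto
    show "?s \<le> M"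
    proof (rule ccontr)
      assume "\<not> ?s \<le> M"
      then have "M < (SUP n. \<bar>a n\<bar>)" unfolding ell_inf_norm_def by simp
      then obtain n where n: "M < \<bar>a n\<bar>" using less_cSUP_iff[OF _ sb(1)] by auto
      define al where "al = \<bar>a n\<bar>"
      have alM: "M < al" using n al_def by simp
      obtain j :: nat where j: "2 * al / (al - M) < real j" using reals_Archimedean2 by blast
      define k where "k = prod_encode (n, j)"
      have nk: "nidx k = n" unfolding nidx_def k_def by simp
      have jk: "j \<le> k" unfolding k_def by (rule le_prod_encode_2)
      have q: "2 * al / (al - M) < real k + 2" using j jk by linarith
      have "2 * al < (real k + 2) * (al - M)" using q alM by (simp add: divide_less_eq mult.commute)
      then have "M < al * (1 - 2 / (real k + 2))" by (simp add: field_simps)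
      let ?S = "{yk d k / 2 <.. yk d k}"
      have yp: "0 < yk d k" using yk_pos[OF d] .
      show False
      proof (rule AE_M0_contra[OF AE, of ?S])
        show "?S \<subseteq> {0<..}" using yp by auto
        show "0 < emeasure lborel ?S" using yp by simp
        fix x assume x: "x \<in> ?S"
        have "al * (1 - 2 / (real k + 2)) \<le> cesaro (Tm d a) x"
          using Tm_lower_point[OF d _ _ sb(2)] x nk al_def by auto
        then show "\<not> \<bar>cesaro (Tm d a) x\<bar> \<le> M"
          using \<open>M < al * (1 - 2 / (real k + 2))\<close> by simp
      qed simp
    qed
  qed
qed


lemma bis_facts:
  assumes "banach_ideal_space S N"
  shows "\<And>f c. f \<in> S \<Longrightarrow> (\<lambda>t. c * f t) \<in> S"
    "\<And>f c. f \<in> S \<Longrightarrow> N (\<lambda>t. c * f t) = \<bar>c\<bar> * N f"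
    "\<And>f g. f \<in> S \<Longrightarrow> g \<in> S \<Longrightarrow> (\<lambda>t. f t + g t) \<in> S"
    "\<And>f g. f \<in> L0 \<Longrightarrow> g \<in> S \<Longrightarrow> (AE t in M0. \<bar>f t\<bar> \<le> \<bar>g t\<bar>) \<Longrightarrow> f \<in> S"
    "\<And>f g. f \<in> L0 \<Longrightarrow> g \<in> S \<Longrightarrow> (AE t in M0. \<bar>f t\<bar> \<le> \<bar>g t\<bar>) \<Longrightarrow> N f \<le> N g"
    "\<And>f. f \<in> S \<Longrightarrow> N f \<ge> 0"
    "S \<subseteq> L0"
  using assms unfolding banach_ideal_space_def by blast+

lemma main_construction:
  assumes ri: "rearrangement_invariant X NX" and d: "d > 0"
    and kX: "(\<lambda>x. min 1 (d/x)) \<in> X" and kN: "NX (\<lambda>x. min 1 (d/x)) \<le> 1"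
  shows "contains_lattice_isometric_ell_inf (cesaro_set (inter_Linf_set X)) (cesaro_norm (inter_Linf_norm NX))"
proof -
  have bis: "banach_ideal_space X NX" using ri unfolding rearrangement_invariant_def by blast
  note B = bis_facts[OF bis]
  have key: "Tm d a \<in> cesaro_set (inter_Linf_set X) \<and> cesaro_norm (inter_Linf_norm NX) (Tm d a) = ell_inf_norm a"
    if a: "a \<in> ell_inf" for a
  proof -
    let ?s = "ell_inf_norm a"
    note sb = ell_inf_bound[OF a]
    let ?g = "\<lambda>x. ?s * min 1 (d/x)"
    have gX: "?g \<in> X" using B(1)[OF kX] .
    have gN: "NX ?g \<le> ?s" using B(2)[OF kX, of ?s] sb(3) kN by (simp add: mult_left_le)
    have TB: "\<bar>Tm d a t\<bar> \<le> ?s" for t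
    proof -
      have "\<bar>Tm d a t\<bar> \<le> ?s * indicator {0<..d} t" by (rule Tm_bound[OF d sb(2)])
      then show ?thesis using sb(3) by (cases "0 < t \<and> t \<le> d") (auto simp: indicator_def)
    qed
    have cm: "cesaro (Tm d a) \<in> L0" using borel_L0[OF cesaro_meas[OF Tm_meas]] .
    have up: "\<bar>cesaro (Tm d a) x\<bar> \<le> \<bar>?g x\<bar>" if "x > 0" for x
    proof -
      have "cesaro (Tm d a) x \<le> ?g x"
        by (rule cesaro_upper[OF Tm_meas Tm_bound[OF d sb(2)] that d])
      then show ?thesis using cesaro_nonneg[of "Tm d a" x] by simp
    qed
    have AEup: "AE t in M0. \<bar>cesaro (Tm d a) t\<bar> \<le> \<bar>?g t\<bar>" using up by (rule AE_M0I)
    have cX: "cesaro (Tm d a) \<in> X" using B(4)[OF cm gX AEup] .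
    have cN: "NX (cesaro (Tm d a)) \<le> ?s" using B(5)[OF cm gX AEup] gN by linarith
    have cL: "cesaro (Tm d a) \<in> Linf"
    proof -
      have "\<bar>cesaro (Tm d a) x\<bar> \<le> ?s" if "x > 0" for x
      proof -
        have m: "\<bar>min 1 (d / x)\<bar> \<le> 1" using that d by auto
        show ?thesis using up[OF that] sb(3) mult_left_le[OF m sb(3)] by (simp add: abs_mult)
      qed
      then show ?thesis unfolding Linf_def using cm by (auto intro!: AE_M0I)
    qed
    have "Tm d a \<in> cesaro_set (inter_Linf_set X)"
      unfolding cesaro_set_def inter_Linf_set_def
      using borel_L0[OF Tm_meas] cesaro_defined_bounded[OF Tm_meas TB] cX cL by auto
    moreover have "cesaro_norm (inter_Linf_norm NX) (Tm d a) = ?s"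
      unfolding cesaro_norm_def inter_Linf_norm_def linf_norm_eq[OF d a] using cN by simp
    ultimately show ?thesis by blast
  qed
  show ?thesis unfolding contains_lattice_isometric_ell_inf_def
  proof (intro exI[of _ "Tm d"] conjI ballI allI)
    fix a assume "a \<in> ell_inf"
    then show "Tm d a \<in> cesaro_set (inter_Linf_set X)"
      "cesaro_norm (inter_Linf_norm NX) (Tm d a) = ell_inf_norm a" using key by blast+
  next
    fix a b :: "nat \<Rightarrow> real"
    show "ae_eq (Tm d (\<lambda>n. a n + b n)) (\<lambda>t. Tm d a t + Tm d b t)"
      unfolding ae_eq_def by (simp add: Tm_add[OF d])
    show "ae_eq (Tm d (\<lambda>n. max (a n) (b n))) (\<lambda>t. max (Tm d a t) (Tm d b t))"
      unfolding ae_eq_def by (simp add: Tm_max[OF d])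
  next
    fix a :: "nat \<Rightarrow> real" and c
    show "ae_eq (Tm d (\<lambda>n. c * a n)) (\<lambda>t. c * Tm d a t)"
      unfolding ae_eq_def by (simp add: Tm_scale[OF d])
  qed
qed


lemma pos_integral_exists:
  assumes cd: "cesaro_defined f" and nz: "\<not> ae_eq f (\<lambda>_. 0)"
  shows "\<exists>x0>0. set_lebesgue_integral lborel {0<..<x0} (\<lambda>t. \<bar>f t\<bar>) > 0"
proof (rule ccontr)
  assume H: "\<not> ?thesis"
  have "AE t in lborel. indicator {0<..<real (Suc m)} t * \<bar>f t\<bar> = 0" for m
  proof -
    have int: "integrable lborel (\<lambda>t. indicator {0<..<real (Suc m)} t * \<bar>f t\<bar>)"
      using cd unfolding cesaro_defined_def set_integrable_def by simp
    have i1: "set_lebesgue_integral lborel {0<..<real (Suc m)} (\<lambda>t. \<bar>f t\<bar>) \<le> 0"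
      using H by (metis not_less of_nat_0_less_iff zero_less_Suc)
    have i2: "0 \<le> set_lebesgue_integral lborel {0<..<real (Suc m)} (\<lambda>t. \<bar>f t\<bar>)"
      unfolding set_lebesgue_integral_def by (intro integral_nonneg_AE) auto
    have "set_lebesgue_integral lborel {0<..<real (Suc m)} (\<lambda>t. \<bar>f t\<bar>) = 0" using i1 i2 by linarith
    then have "integral\<^sup>L lborel (\<lambda>t. indicator {0<..<real (Suc m)} t * \<bar>f t\<bar>) = 0"
      unfolding set_lebesgue_integral_def by simp
    then show ?thesis using integral_nonneg_eq_0_iff_AE[OF int] by auto
  qed
  then have "AE t in lborel. \<forall>m. indicator {0<..<real (Suc m)} t * \<bar>f t\<bar> = 0"
    by (subst AE_all_countable) blast
  then have "AE t in lborel. 0 < t \<longrightarrow> f t = 0"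
  proof (rule AE_mp, intro AE_I2 impI)
    fix t :: real assume A: "\<forall>m. indicator {0<..<real (Suc m)} t * \<bar>f t\<bar> = 0" and t: "0 < t"
    obtain m :: nat where "t < real m" using reals_Archimedean2 by blast
    then have "t \<in> {0<..<real (Suc m)}" using t by auto
    then show "f t = 0" using A[rule_format, of m] by simp
  qed
  then have "ae_eq f (\<lambda>_. 0)" unfolding ae_eq_def AE_M0_iff .
  then show False using nz by simp
qed

lemma cesaro_mono_int:
  assumes cd: "cesaro_defined f" and x0: "0 < x0" "x0 \<le> x"
  shows "set_lebesgue_integral lborel {0<..<x0} (\<lambda>t. \<bar>f t\<bar>) \<le> set_lebesgue_integral lborel {0<..<x} (\<lambda>t. \<bar>f t\<bar>)"
  unfolding set_lebesgue_integral_def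
proof (rule integral_mono)
  show "integrable lborel (\<lambda>t. indicat_real {0<..<x0} t *\<^sub>R \<bar>f t\<bar>)"
    "integrable lborel (\<lambda>t. indicat_real {0<..<x} t *\<^sub>R \<bar>f t\<bar>)"
    using cd x0 unfolding cesaro_defined_def set_integrable_def by auto
qed (use x0 in \<open>auto simp: indicator_def\<close>)

lemma caseB:
  assumes ri: "rearrangement_invariant X NX"
    and CXnt: "\<exists>f\<in>cesaro_set X. \<not> ae_eq f (\<lambda>_. 0)"
    and oc: "order_continuous_part X NX = X"
  shows "\<exists>d>0. (\<lambda>x. min 1 (d/x)) \<in> X \<and> NX (\<lambda>x. min 1 (d/x)) \<le> 1"
proof -
  have bis: "banach_ideal_space X NX" using ri unfolding rearrangement_invariant_def by blast
  note B = bis_facts[OF bis]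
  have req: "\<And>f g. f \<in> X \<Longrightarrow> g \<in> L0 \<Longrightarrow> equimeasurable f g \<Longrightarrow> g \<in> X"
    using ri unfolding rearrangement_invariant_def by blast
  obtain f where fL: "f \<in> L0" and cd: "cesaro_defined f" and cX: "cesaro f \<in> X" and nz: "\<not> ae_eq f (\<lambda>_. 0)"
    using CXnt unfolding cesaro_set_def by auto
  obtain x0 where x0: "x0 > 0" and c: "set_lebesgue_integral lborel {0<..<x0} (\<lambda>t. \<bar>f t\<bar>) > 0"
    using pos_integral_exists[OF cd nz] by blast
  define c where "c = set_lebesgue_integral lborel {0<..<x0} (\<lambda>t. \<bar>f t\<bar>)"
  have c0: "c > 0" using c c_def by simp
  have cl: "c / x \<le> cesaro f x" if "x0 \<le> x" for x
    using cesaro_mono_int[OF cd x0 that] x0 that unfolding cesaro_def c_def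
    by (simp add: divide_right_mono)
  define A where "A = {x0..<2*x0}"
  define Bs where "Bs = {0<..<x0}"
  have indA_X: "indicator A \<in> X"
  proof (rule B(4)[OF _ B(1)[OF cX, of "2*x0/c"]])
    show "indicator A \<in> L0" unfolding A_def by (intro borel_L0) measurable
    show "AE t in M0. \<bar>indicator A t :: real\<bar> \<le> \<bar>2 * x0 / c * cesaro f t\<bar>"
    proof (rule AE_M0I)
      fix t :: real assume t: "0 < t"
      show "\<bar>indicator A t :: real\<bar> \<le> \<bar>2 * x0 / c * cesaro f t\<bar>"
      proof (cases "t \<in> A")
        case True
        then have tt: "x0 \<le> t" "t < 2 * x0" unfolding A_def by auto
        have "c / (2 * x0) \<le> c / t" using tt c0 x0 by (intro divide_left_mono) auto
        also have "\<dots> \<le> cesaro f t" using cl tt by simp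
        finally have ge1: "1 \<le> 2 * x0 / c * cesaro f t" using c0 x0 by (simp add: field_simps)
        have a1: "\<bar>indicator A t\<bar> = (1::real)" using True by simp
        have a2: "\<bar>2 * x0 / c * cesaro f t\<bar> = 2 * x0 / c * cesaro f t"
          using ge1 by (intro abs_of_nonneg) linarith
        show ?thesis by (subst a1, subst a2) (rule ge1)
      qed simp
    qed
  qed
  have indB_X: "indicator Bs \<in> X"
  proof (rule req[OF indA_X])
    show "indicator Bs \<in> L0" unfolding Bs_def by (intro borel_L0) measurable
    show "equimeasurable (indicator A) (indicator Bs)"
      by (rule equimeasurable_indicator) (use x0 in \<open>auto simp: A_def Bs_def\<close>)
  qed
  define G where "G = (\<lambda>t. indicator Bs t + x0 / c * cesaro f t)"
  have GX: "G \<in> X" unfolding G_def by (intro B(3) indB_X B(1) cX)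
  have Gk: "min 1 (x0 / t) \<le> G t" if t: "t > 0" for t
  proof (cases "t < x0")
    case True
    then show ?thesis unfolding G_def Bs_def using t c0 x0 cesaro_nonneg[of f t]
      by (auto simp: indicator_def)
  next
    case False
    then have "c / t \<le> cesaro f t" using cl by simp
    then have "x0 / c * (c / t) \<le> x0 / c * cesaro f t" using x0 c0 by (intro mult_left_mono) auto
    then have "x0 / t \<le> x0 / c * cesaro f t" using c0 by simp
    then show ?thesis unfolding G_def by (simp add: indicator_def min_le_iff_disj)
  qed
  define F where "F = (\<lambda>n t. min 1 (x0 / t * inverse (real (Suc n))))"
  have FL: "F n \<in> L0" for n unfolding F_def by (intro borel_L0) measurable
  have FG: "AE t in M0. \<bar>F n t\<bar> \<le> \<bar>G t\<bar>" for n
  proof (rule AE_M0I)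
    fix t :: real assume t: "0 < t"
    have "inverse (real (Suc n)) \<le> 1" by (simp add: inverse_le_1_iff)
    then have "x0 / t * inverse (real (Suc n)) \<le> x0 / t * 1"
      using x0 t by (intro mult_left_mono) auto
    then have "F n t \<le> min 1 (x0 / t)" unfolding F_def by simp
    moreover have "0 \<le> F n t" unfolding F_def using x0 t by simp
    ultimately show "\<bar>F n t\<bar> \<le> \<bar>G t\<bar>" using Gk[OF t] by (simp add: min_def split: if_splits)
  qed
  have lim: "(\<lambda>n. NX (F n)) \<longlonglongrightarrow> 0"
  proof -
    have "G \<in> order_continuous_part X NX" using GX oc by simp
    then have H: "\<And>F. (\<forall>n. F n \<in> L0) \<Longrightarrow>
        (AE t in M0. (\<forall>n. 0 \<le> F n t \<and> F n t \<le> \<bar>G t\<bar> \<and> F (Suc n) t \<le> F n t) \<and>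
                     (\<lambda>n. F n t) \<longlonglongrightarrow> 0) \<Longrightarrow> (\<lambda>n. NX (F n)) \<longlonglongrightarrow> 0"
      unfolding order_continuous_part_def by blast
    show ?thesis
    proof (rule H)
      show "\<forall>n. F n \<in> L0" using FL by blast
      have "AE t in M0. \<forall>n. \<bar>F n t\<bar> \<le> \<bar>G t\<bar>" using FG by (subst AE_all_countable) blast
      then show "AE t in M0. (\<forall>n. 0 \<le> F n t \<and> F n t \<le> \<bar>G t\<bar> \<and> F (Suc n) t \<le> F n t) \<and>
                     (\<lambda>n. F n t) \<longlonglongrightarrow> 0"
      proof (rule AE_mp, intro AE_M0I impI conjI allI)
        fix t :: real and n assume t: "0 < t" and A: "\<forall>n. \<bar>F n t\<bar> \<le> \<bar>G t\<bar>"
        show "0 \<le> F n t" unfolding F_def using x0 t by simp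
        then show "F n t \<le> \<bar>G t\<bar>" using A[rule_format, of n] by linarith
        have "inverse (real (Suc (Suc n))) \<le> inverse (real (Suc n))"
          by (rule le_imp_inverse_le) auto
        then have "x0 / t * inverse (real (Suc (Suc n))) \<le> x0 / t * inverse (real (Suc n))"
          using x0 t by (intro mult_left_mono) auto
        then show "F (Suc n) t \<le> F n t" unfolding F_def by (simp add: min.coboundedI2)
        have "(\<lambda>n. x0 / t * inverse (real (Suc n))) \<longlonglongrightarrow> x0 / t * 0"
          by (intro tendsto_mult tendsto_const LIMSEQ_inverse_real_of_nat)
        then have "(\<lambda>n. min 1 (x0 / t * inverse (real (Suc n)))) \<longlonglongrightarrow> min 1 (x0 / t * 0)"
          by (intro tendsto_min tendsto_const)
        then show "(\<lambda>n. F n t) \<longlonglongrightarrow> 0" unfolding F_def by simp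
      qed
    qed
  qed
  then have "eventually (\<lambda>n. NX (F n) < 1) sequentially" by (rule order_tendstoD) simp
  then obtain n where n: "NX (F n) < 1" by (auto simp: eventually_sequentially)
  have FX: "F n \<in> X" using B(4)[OF FL GX FG] .
  have Fe: "F n = (\<lambda>x. min 1 ((x0 / real (Suc n)) / x))"
    unfolding F_def by (auto simp: fun_eq_iff field_simps)
  show ?thesis
    by (rule exI[of _ "x0 / real (Suc n)"]) (use x0 FX n Fe in auto)
qed



lemma L0_set: assumes "f \<in> L0" shows "{t. 0 < t \<and> t < R \<and> e < \<bar>f t\<bar>} \<in> sets borel"
proof -
  have [measurable]: "f \<in> borel_measurable M0" using assms unfolding L0_def by simp
  have "{t \<in> space M0. e < \<bar>f t\<bar>} \<in> sets M0" by measurable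
  then have "{t \<in> {0<..}. e < \<bar>f t\<bar>} \<in> sets lborel"
    unfolding M0_def by (subst (asm) sets_restrict_space_iff) (auto simp: space_restrict_space)
  then have "{t \<in> {0<..}. e < \<bar>f t\<bar>} \<inter> {..<R} \<in> sets borel" by simp
  moreover have "{t \<in> {0<..}. e < \<bar>f t\<bar>} \<inter> {..<R} = {t. 0 < t \<and> t < R \<and> e < \<bar>f t\<bar>}" by auto
  ultimately show ?thesis by simp
qed

lemma exists_E:
  assumes fL: "f \<in> L0" and nz: "\<not> ae_eq f (\<lambda>_. 0)"
  shows "\<exists>e>0. \<exists>R>0. emeasure lborel {t. 0 < t \<and> t < R \<and> e < \<bar>f t\<bar>} > 0"
proof (rule ccontr)
  assume H: "\<not> ?thesis"
  define En where "En m = {t. 0 < t \<and> t < real (Suc m) \<and> 1 / real (Suc m) < \<bar>f t\<bar>}" for m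
  have "En m \<in> null_sets lborel" for m
  proof -
    have "En m \<in> sets borel" unfolding En_def by (rule L0_set[OF fL])
    moreover have "emeasure lborel (En m) = 0"
    proof (rule ccontr)
      assume "emeasure lborel (En m) \<noteq> 0"
      then have "0 < emeasure lborel (En m)" by (simp add: zero_less_iff_neq_zero)
      moreover have "1 / real (Suc m) > 0" "real (Suc m) > 0" by auto
      ultimately have "\<exists>e>0. \<exists>R>0. emeasure lborel {t. 0 < t \<and> t < R \<and> e < \<bar>f t\<bar>} > 0"
        unfolding En_def by blast
      then show False using H by blast
    qed
    ultimately show ?thesis by auto
  qed
  then have "AE t in lborel. \<forall>m. t \<notin> En m" by (subst AE_all_countable) (blast intro: AE_not_in)
  then have "AE t in lborel. 0 < t \<longrightarrow> f t = 0"
  proof (rule AE_mp, intro AE_I2 impI)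
    fix t :: real assume A: "\<forall>m. t \<notin> En m" and t: "0 < t"
    show "f t = 0"
    proof (rule ccontr)
      assume "f t \<noteq> 0"
      then have ft: "0 < \<bar>f t\<bar>" by simp
      obtain m1 :: nat where m1: "t < real m1" using reals_Archimedean2 by blast
      obtain m2 :: nat where m2: "1 / \<bar>f t\<bar> < real m2" using reals_Archimedean2 by blast
      define m where "m = max m1 m2"
      have "t < real (Suc m)" using m1 unfolding m_def by linarith
      moreover have "1 / real (Suc m) < \<bar>f t\<bar>"
      proof -
        have "1 / \<bar>f t\<bar> < real (Suc m)" using m2 unfolding m_def by linarith
        then show ?thesis using ft by (simp add: field_simps)
      qed
      ultimately have "t \<in> En m" unfolding En_def using t by simp
      then show False using A by blast
    qed
  qed
  then have "ae_eq f (\<lambda>_. 0)" unfolding ae_eq_def AE_M0_iff .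
  then show False using nz by simp
qed

lemma fmeas_bounded2: fixes R :: real shows "A \<in> sets borel \<Longrightarrow> A \<subseteq> {a<..<R} \<Longrightarrow> A \<in> fmeasurable lborel"
proof -
  assume A: "A \<in> sets borel" "A \<subseteq> {a<..<R}"
  have "emeasure lborel A \<le> emeasure lborel {a<..<R}" by (rule emeasure_mono) (use A in simp_all)
  also have "\<dots> < \<infinity>" by (cases "a \<le> R") auto
  finally show ?thesis using A by (auto simp: fmeasurable_def)
qed

lemma fmeas_bounded: fixes R :: real shows "A \<in> sets borel \<Longrightarrow> A \<subseteq> {0<..<R} \<Longrightarrow> A \<in> fmeasurable lborel"
proof -
  assume A: "A \<in> sets borel" "A \<subseteq> {0<..<R}"
  have "emeasure lborel A \<le> emeasure lborel {0<..<R}" by (rule emeasure_mono) (use A in simp_all)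
  also have "\<dots> < \<infinity>" by (cases "0 \<le> R") auto
  finally show ?thesis using A by (auto simp: fmeasurable_def)
qed

lemma mE_props:
  assumes E: "E \<in> sets borel" "E \<subseteq> {0<..<R}"
  shows "\<And>r r'. r \<le> r' \<Longrightarrow> measure lborel (E \<inter> {..<r}) \<le> measure lborel (E \<inter> {..<r'})"
    "\<And>r r'. r \<le> r' \<Longrightarrow> measure lborel (E \<inter> {..<r'}) \<le> measure lborel (E \<inter> {..<r}) + (r' - r)"
    "continuous_on UNIV (\<lambda>r. measure lborel (E \<inter> {..<r}))"
proof -
  have fm: "E \<inter> {..<r} \<in> fmeasurable lborel" for r by (rule fmeas_bounded[of _ R]) (use E in auto)
  show mono: "measure lborel (E \<inter> {..<r}) \<le> measure lborel (E \<inter> {..<r'})" if "r \<le> r'" for r r'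
    by (rule measure_mono_fmeasurable[OF _ _ fm]) (use that E in auto)
  show lip: "measure lborel (E \<inter> {..<r'}) \<le> measure lborel (E \<inter> {..<r}) + (r' - r)" if "r \<le> r'" for r r'
  proof -
    have "measure lborel (E \<inter> {..<r'}) \<le> measure lborel ((E \<inter> {..<r}) \<union> {r..<r'})"
    proof (rule measure_mono_fmeasurable)
      show "(E \<inter> {..<r}) \<union> {r..<r'} \<in> fmeasurable lborel"
        by (rule fmeas_bounded2[of _ "min 0 r - 1" "max R r' + 1"]) (use E in \<open>auto simp: subset_iff\<close>)
    qed (use E in auto)
    also have "\<dots> \<le> measure lborel (E \<inter> {..<r}) + measure lborel {r..<r'}"
      by (rule measure_subadditive) (use fm[of r] that in \<open>auto simp: fmeasurable_def\<close>)
    also have "measure lborel {r..<r'} = r' - r" using that by simp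
    finally show ?thesis .
  qed
  show "continuous_on UNIV (\<lambda>r. measure lborel (E \<inter> {..<r}))"
  proof (rule lipschitz_on_continuous_on[of 1], rule lipschitz_onI)
    fix x y :: real
    show "dist (measure lborel (E \<inter> {..<x})) (measure lborel (E \<inter> {..<y})) \<le> 1 * dist x y"
    proof (cases "x \<le> y")
      case True then show ?thesis using mono[OF True] lip[OF True] by (simp add: dist_real_def)
    next
      case False then have "y \<le> x" by simp
      then show ?thesis using mono[of y x] lip[of y x] by (simp add: dist_real_def)
    qed
  qed simp
qed


lemma cesaro_lower2:
  assumes [measurable]: "f \<in> borel_measurable borel" and bB: "\<And>t. \<bar>f t\<bar> \<le> B"
    and x: "0 < x" and y: "0 \<le> y" "y \<le> z" "z \<le> x" and c: "\<And>t. y < t \<Longrightarrow> t < z \<Longrightarrow> c \<le> \<bar>f t\<bar>"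
  shows "c * (z - y) / x \<le> cesaro f x"
proof -
  let ?g = "\<lambda>t. indicator {0<..<x} t * \<bar>f t\<bar>"
  have ig: "integrable lborel ?g" using integrable_ind_bounded[OF assms(1) bB] x by simp
  have e: "cesaro f x = integral\<^sup>L lborel ?g / x"
    unfolding cesaro_def set_lebesgue_integral_def by simp
  have "c * (z - y) = (LINT t|lborel. c * indicator {y<..<z} t)" using y by (simp add: integral_ind_const)
  also have "\<dots> \<le> integral\<^sup>L lborel ?g"
    by (rule integral_mono[OF integrable_ind_const ig])
       (use c y in \<open>auto simp: indicator_def\<close>)
  finally show ?thesis using e x by (simp add: divide_right_mono)
qed

lemma cesaro_ind_lower:
  assumes d: "0 < d" and x: "0 < x"
  shows "min 1 (d / x) \<le> cesaro (indicator {0<..<d}) x"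
proof -
  have m: "indicator {0<..<d} \<in> borel_measurable borel" by measurable
  have b: "\<bar>indicator {0<..<d} t :: real\<bar> \<le> 1" for t by (simp add: indicator_def)
  show ?thesis
  proof (cases "x \<le> d")
    case True
    have "1 * (x - 0) / x \<le> cesaro (indicator {0<..<d}) x"
      by (rule cesaro_lower2[OF m b x]) (use True x in auto)
    then show ?thesis using x by simp
  next
    case False
    have "1 * (d - 0) / x \<le> cesaro (indicator {0<..<d}) x"
      by (rule cesaro_lower2[OF m b x]) (use False d in auto)
    then show ?thesis using x by (simp add: min_le_iff_disj)
  qed
qed


lemma caseA:
  assumes ri: "rearrangement_invariant X NX"
    and f1: "f1 \<in> order_continuous_part X NX" "\<not> ae_eq f1 (\<lambda>_. 0)"
    and cb: "cesaro_bounded_on X NX"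
  shows "\<exists>d>0. (\<lambda>x. min 1 (d/x)) \<in> X \<and> NX (\<lambda>x. min 1 (d/x)) \<le> 1"
proof -
  have bis: "banach_ideal_space X NX" using ri unfolding rearrangement_invariant_def by blast
  note B = bis_facts[OF bis]
  have req: "\<And>f g. f \<in> X \<Longrightarrow> g \<in> L0 \<Longrightarrow> equimeasurable f g \<Longrightarrow> g \<in> X \<and> NX g = NX f"
    using ri unfolding rearrangement_invariant_def by blast
  obtain K where K: "\<And>f. f \<in> X \<Longrightarrow> cesaro_defined f \<and> cesaro f \<in> X \<and> NX (cesaro f) \<le> K * NX f"
    using cb unfolding cesaro_bounded_on_def by blast
  have f1X: "f1 \<in> X" using f1(1) unfolding order_continuous_part_def by blast
  have f1L: "f1 \<in> L0" using f1X B(7) by blast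
  obtain e R where e: "e > 0" and R: "R > 0" and Epos: "emeasure lborel {t. 0 < t \<and> t < R \<and> e < \<bar>f1 t\<bar>} > 0"
    using exists_E[OF f1L f1(2)] by blast
  define E where "E = {t. 0 < t \<and> t < R \<and> e < \<bar>f1 t\<bar>}"
  have Es: "E \<in> sets borel" unfolding E_def by (rule L0_set[OF f1L])
  have Esub: "E \<subseteq> {0<..<R}" unfolding E_def by auto
  note mp = mE_props[OF Es Esub]
  define m where "m r = measure lborel (E \<inter> {..<r})" for r
  have Efm: "E \<in> fmeasurable lborel" by (rule fmeas_bounded[OF Es Esub])
  define mu where "mu = measure lborel E"
  have mu0: "mu > 0"
  proof -
    have "emeasure lborel E = ennreal mu" unfolding mu_def by (rule emeasure_eq_measure2[OF Efm])
    then show ?thesis using Epos unfolding E_def[symmetric] by simp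
  qed
  have m0: "m 0 = 0"
  proof -
    have "E \<inter> {..<0} = {}" using Esub by auto
    then show ?thesis unfolding m_def by simp
  qed
  have mR: "m R = mu"
  proof -
    have "E \<inter> {..<R} = E" using Esub by auto
    then show ?thesis unfolding m_def mu_def by simp
  qed
  define v where "v n = mu / real (Suc (Suc n))" for n
  have v0: "0 < v n" for n unfolding v_def using mu0 by simp
  have vmu: "v n \<le> mu" for n unfolding v_def using mu0 by (simp add: divide_le_eq)
  have vdec: "v (Suc n) < v n" for n unfolding v_def using mu0 by (simp add: divide_strict_left_mono)
  have "\<forall>n. \<exists>r. 0 \<le> r \<and> r \<le> R \<and> m r = v n"
  proof
    fix n
    show "\<exists>r. 0 \<le> r \<and> r \<le> R \<and> m r = v n"
      by (rule IVT'[of m 0 "v n" R]) (use m0 mR v0[of n] vmu[of n] R mp(3) in \<open>auto simp: m_def intro: continuous_on_subset\<close>)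
  qed
  then obtain r where r: "\<And>n. 0 \<le> r n" "\<And>n. r n \<le> R" "\<And>n. m (r n) = v n" by metis
  have rdec: "r (Suc n) < r n" for n
  proof (rule ccontr)
    assume "\<not> r (Suc n) < r n"
    then have "m (r n) \<le> m (r (Suc n))" unfolding m_def by (intro mp(1)) simp
    then show False using r(3)[of n] r(3)[of "Suc n"] vdec[of n] by simp
  qed
  have rmono: "r n' \<le> r n" if "n \<le> n'" for n n'
    using that by (induction rule: dec_induct) (auto intro: order_trans less_imp_le[OF rdec])
  define En where "En n = E \<inter> {..<r n}" for n
  have Ens: "En n \<in> sets borel" for n unfolding En_def using Es by simp
  have Enfm: "En n \<in> fmeasurable lborel" for n
    by (rule fmeas_bounded[of _ R]) (use Ens Esub in \<open>auto simp: En_def\<close>)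
  have Enm: "emeasure lborel (En n) = ennreal (v n)" for n
    using emeasure_eq_measure2[OF Enfm[of n]] r(3)[of n] unfolding m_def En_def by simp
  define F where "F n t = e * indicator (En n) t" for n t
  have FL: "F n \<in> L0" for n unfolding F_def by (intro borel_L0) (use Ens in measurable)
  define Z where "Z = (\<Inter>n. En n)"
  have Znull: "Z \<in> null_sets lborel"
  proof -
    have Zs: "Z \<in> sets borel" unfolding Z_def using Ens by auto
    have Zfm: "Z \<in> fmeasurable lborel" by (rule fmeas_bounded[of _ R]) (use Zs Esub in \<open>auto simp: Z_def En_def\<close>)
    have le: "measure lborel Z \<le> v n" for n
    proof -
      have "measure lborel Z \<le> measure lborel (En n)"
        by (rule measure_mono_fmeasurable) (use Zs Enfm in \<open>auto simp: Z_def\<close>)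
      also have "\<dots> = v n" using r(3)[of n] unfolding m_def En_def by simp
      finally show ?thesis .
    qed
    have "measure lborel Z = 0"
    proof (rule ccontr)
      assume "measure lborel Z \<noteq> 0"
      then have zp: "measure lborel Z > 0" using measure_nonneg[of lborel Z] by linarith
      obtain n :: nat where n: "mu / measure lborel Z < real n" using reals_Archimedean2 by blast
      have "mu < real (Suc (Suc n)) * measure lborel Z" using n zp by (simp add: divide_less_eq algebra_simps)
      then have "v n < measure lborel Z" unfolding v_def by (simp add: divide_less_eq mult.commute)
      then show False using le[of n] by simp
    qed
    then show ?thesis using Zs Zfm by (simp add: null_sets_def emeasure_eq_ennreal_measure fmeasurable_def)
  qed
  have lim: "(\<lambda>n. NX (F n)) \<longlonglongrightarrow> 0"
  proof -
    have H: "\<And>F. (\<forall>n. F n \<in> L0) \<Longrightarrow>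
        (AE t in M0. (\<forall>n. 0 \<le> F n t \<and> F n t \<le> \<bar>f1 t\<bar> \<and> F (Suc n) t \<le> F n t) \<and>
                     (\<lambda>n. F n t) \<longlonglongrightarrow> 0) \<Longrightarrow> (\<lambda>n. NX (F n)) \<longlonglongrightarrow> 0"
      using f1(1) unfolding order_continuous_part_def by blast
    show ?thesis
    proof (rule H)
      show "\<forall>n. F n \<in> L0" using FL by blast
      have "AE t in lborel. t \<notin> Z" by (rule AE_not_in[OF Znull])
      then show "AE t in M0. (\<forall>n. 0 \<le> F n t \<and> F n t \<le> \<bar>f1 t\<bar> \<and> F (Suc n) t \<le> F n t) \<and>
                     (\<lambda>n. F n t) \<longlonglongrightarrow> 0"
        unfolding AE_M0_iff
      proof (rule AE_mp, intro AE_I2 impI conjI allI)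
        fix t :: real and n assume tZ: "t \<notin> Z" and t: "0 < t"
        show "0 \<le> F n t" unfolding F_def using e by simp
        show "F n t \<le> \<bar>f1 t\<bar>" unfolding F_def En_def E_def by (auto simp: indicator_def)
        have "En (Suc n) \<subseteq> En n" unfolding En_def using rdec[of n] by auto
        then show "F (Suc n) t \<le> F n t" unfolding F_def using e by (auto simp: indicator_def)
        obtain n0 where n0: "t \<notin> En n0" using tZ unfolding Z_def by blast
        have "\<forall>n\<ge>n0. F n t = 0"
        proof (intro allI impI)
          fix n assume "n0 \<le> n"
          then have "r n \<le> r n0" by (rule rmono)
          then have "En n \<subseteq> En n0" unfolding En_def by auto
          then have "t \<notin> En n" using n0 by blast
          then show "F n t = 0" unfolding F_def by simp
        qed
        then show "(\<lambda>n. F n t) \<longlonglongrightarrow> 0"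
          by (intro tendsto_eventually) (auto simp: eventually_sequentially)
      qed
    qed
  qed
  have FX: "F n \<in> X" for n
  proof (rule B(4)[OF FL f1X])
    show "AE t in M0. \<bar>F n t\<bar> \<le> \<bar>f1 t\<bar>"
      by (rule AE_M0I) (use e in \<open>auto simp: F_def En_def E_def indicator_def\<close>)
  qed
  have indE: "indicator (En n) = (\<lambda>t. (1/e) * F n t)" for n
    unfolding F_def using e by (auto simp: fun_eq_iff)
  have indEX: "indicator (En n) \<in> X" for n unfolding indE by (rule B(1)[OF FX])
  have indEN: "NX (indicator (En n)) = NX (F n) / e" for n
    unfolding indE B(2)[OF FX] using e by simp
  have eqm: "equimeasurable (indicator (En n)) (indicator {0<..<v n})" for n
    by (rule equimeasurable_indicator) (use Esub v0[of n] Enm[of n] in \<open>auto simp: En_def\<close>)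
  have indvL: "indicator {0<..<v n} \<in> L0" for n by (intro borel_L0) measurable
  have indv: "indicator {0<..<v n} \<in> X \<and> NX (indicator {0<..<v n}) = NX (F n) / e" for n
    using req[OF indEX indvL eqm] indEN by simp
  have "(\<lambda>n. K * (NX (F n) / e)) \<longlonglongrightarrow> K * (0 / e)"
    by (intro tendsto_mult tendsto_divide tendsto_const lim) (use e in simp)
  then have "eventually (\<lambda>n. K * (NX (F n) / e) < 1) sequentially" by (rule order_tendstoD) simp
  then obtain n where n: "K * (NX (F n) / e) < 1" by (auto simp: eventually_sequentially)
  define d where "d = v n"
  have d0: "0 < d" unfolding d_def by (rule v0)
  have iX: "indicator {0<..<d} \<in> X" and iN: "NX (indicator {0<..<d}) = NX (F n) / e"
    using indv[of n] unfolding d_def by auto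
  have cX: "cesaro (indicator {0<..<d}) \<in> X" and cN: "NX (cesaro (indicator {0<..<d})) \<le> K * NX (indicator {0<..<d})"
    using K[OF iX] by auto
  have kL: "(\<lambda>x. min 1 (d / x)) \<in> L0" by (intro borel_L0) measurable
  have kAE: "AE x in M0. \<bar>min 1 (d / x)\<bar> \<le> \<bar>cesaro (indicator {0<..<d}) x\<bar>"
  proof (rule AE_M0I)
    fix x :: real assume x: "0 < x"
    have "0 \<le> min 1 (d / x)" using x d0 by simp
    then show "\<bar>min 1 (d / x)\<bar> \<le> \<bar>cesaro (indicator {0<..<d}) x\<bar>"
      using cesaro_ind_lower[OF d0 x] by simp
  qed
  have "(\<lambda>x. min 1 (d/x)) \<in> X" by (rule B(4)[OF kL cX kAE])
  moreover have "NX (\<lambda>x. min 1 (d/x)) \<le> 1"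
    using B(5)[OF kL cX kAE] cN n unfolding iN by linarith
  ultimately show ?thesis using d0 by blast
qed


theorem corollary4p8:
  fixes X :: "(real \<Rightarrow> real) set" and NX :: "(real \<Rightarrow> real) \<Rightarrow> real"
  assumes ri: "rearrangement_invariant X NX"
    and fatou: "fatou_property X NX"
    and CX_nontrivial: "\<exists>f\<in>cesaro_set X. \<not> ae_eq f (\<lambda>_. 0)"
    and alt: "((\<exists>f\<in>order_continuous_part X NX. \<not> ae_eq f (\<lambda>_. 0)) \<and> cesaro_bounded_on X NX)
              \<or> order_continuous_part X NX = X"
  shows "contains_lattice_isometric_ell_inf
           (cesaro_set (inter_Linf_set X)) (cesaro_norm (inter_Linf_norm NX))"
proof -
  have "\<exists>d>0. (\<lambda>x. min 1 (d/x)) \<in> X \<and> NX (\<lambda>x. min 1 (d/x)) \<le> 1"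
    using alt
  proof
    assume A: "(\<exists>f\<in>order_continuous_part X NX. \<not> ae_eq f (\<lambda>_. 0)) \<and> cesaro_bounded_on X NX"
    then obtain f1 where "f1 \<in> order_continuous_part X NX" "\<not> ae_eq f1 (\<lambda>_. 0)" by blast
    then show ?thesis using caseA[OF ri _ _] A by blast
  next
    assume "order_continuous_part X NX = X"
    then show ?thesis using caseB[OF ri CX_nontrivial] by blast
  qed
  then obtain d where d: "d > 0" "(\<lambda>x. min 1 (d/x)) \<in> X" "NX (\<lambda>x. min 1 (d/x)) \<le> 1" by blast
  show ?thesis by (rule main_construction[OF ri d])
qed

end
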